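(* Let $\lambda>0$, $\theta\in(0,1]$, $\lambda\theta\in(0,1]$. A function $\mathcal S$ analytic in a neighbourhood of $0$ satisfies the time-independent equation $$(2\lambda\theta z+1)\mathcal S(z)-\theta(1+2\lambda z)\mathcal S(z)^2-\frac{\theta z(1+\lambda z)}{2}\partial_z[\mathcal S^2](z)=0$$ if and only if either $\mathcal S\equiv0$ or $\mathcal S(z)=\dfrac{\lambda\theta z+1}{\lambda\theta z+\theta}$. Moreover, this nonzero solution equals $S_Q(\lambda\theta z)$, where $S_Q$ is the $S$ transform of an orthogonal projection $Q$ with $\tau(Q)=\theta$ in $(\mathcal A,\tau)$, and it coincides with the $S$ transform of $PQP$ viewed in the compressed space $(P\mathcal AP,\tau/\tau(P))$, where $P,Q$ are free orthogonal projections with $\tau(P)=\lambda\theta$, $\tau(Q)=\theta$.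
   Context: For a non-degenerate element with moment generating function $\mathcal M(z)=\sum_{n\ge0}m_nz^n$ ($m_1\ne0$), its $S$ transform is $\mathcal S(z)=\frac{1+z}{z}\eta(z)$ where $\eta$ is the local inverse near $0$ of $\mathcal M-1$ (with the removable singularity at $0$ removed). In the compressed space the moments of $PQP$ are $\tau((PQP)^n)/\tau(P)$. *)

theory Defs
  imports "HOL-Analysis.Analysis"
begin

definition star_prob_space :: "('a::real_algebra_1 \<Rightarrow> 'a) \<Rightarrow> ('a \<Rightarrow> real) \<Rightarrow> bool" where
  "star_prob_space st tau \<longleftrightarrow>
     (\<forall>a. st (st a) = a) \<and> (\<forall>a b. st (a + b) = st a + st b) \<and>
     (\<forall>r a. st (r *\<^sub>R a) = r *\<^sub>R st a) \<and> (\<forall>a b. st (a * b) = st b * st a) \<and>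
     (\<forall>a b. tau (a + b) = tau a + tau b) \<and> (\<forall>r a. tau (r *\<^sub>R a) = r * tau a) \<and>
     tau 1 = 1 \<and> (\<forall>a. tau (st a * a) \<ge> 0) \<and> (\<forall>a b. tau (a * b) = tau (b * a))"

definition orth_proj :: "('a::real_algebra_1 \<Rightarrow> 'a) \<Rightarrow> 'a \<Rightarrow> bool" where
  "orth_proj st p \<longleftrightarrow> p * p = p \<and> st p = p"

text \<open>Unital subalgebra generated by x (polynomials in x); for a self-adjoint x
  this is also the unital *-subalgebra generated by x.\<close>
definition alg_gen :: "'a::real_algebra_1 \<Rightarrow> 'a set" where
  "alg_gen x = {y. \<exists>n c. y = (\<Sum>i<n. c i *\<^sub>R x ^ i)}"

definition free_pair :: "('a::real_algebra_1 \<Rightarrow> real) \<Rightarrow> 'a \<Rightarrow> 'a \<Rightarrow> bool" where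
  "free_pair tau x y \<longleftrightarrow>
     (\<forall>n (a :: nat \<Rightarrow> 'a) (ix :: nat \<Rightarrow> bool). n \<ge> 1 \<longrightarrow>
        (\<forall>k<n. a k \<in> (if ix k then alg_gen x else alg_gen y) \<and> tau (a k) = 0) \<longrightarrow>
        (\<forall>k. Suc k < n \<longrightarrow> ix k \<noteq> ix (Suc k)) \<longrightarrow>
        tau (prod_list (map a [0..<n])) = 0)"

text \<open>S transform of a moment sequence m (m 0 = 1): S(w) = (1+w)/w * eta(w), where eta is
  the continuous local inverse near 0 of M - 1 with eta 0 = 0, M(z) = sum m_n z^n,
  and the removable singularity at 0 removed (S continuous at 0).\<close>
definition is_S_transform :: "(nat \<Rightarrow> complex) \<Rightarrow> (complex \<Rightarrow> complex) \<Rightarrow> bool" where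
  "is_S_transform m S \<longleftrightarrow> m 1 \<noteq> 0 \<and>
     (\<exists>r>0. \<exists>eta. eta 0 = 0 \<and> continuous_on (ball 0 r) eta \<and>
        (\<forall>w\<in>ball 0 r. (\<lambda>n. m n * eta w ^ n) sums (1 + w)) \<and>
        (\<forall>w\<in>ball 0 r. w \<noteq> 0 \<longrightarrow> S w = (1 + w) / w * eta w) \<and>
        isCont S 0)"

end

theory Submission
  imports Defs "HOL-Complex_Analysis.Complex_Analysis"
begin

fun wd :: "'a::ring_1 \<Rightarrow> 'a \<Rightarrow> bool \<Rightarrow> nat \<Rightarrow> 'a" where
  "wd p q b 0 = 1"
| "wd p q b (Suc L) = (if b then p else q) * wd p q (\<not> b) L"

lemma wd_prod_list: "wd p q b L = prod_list (map (\<lambda>k. if even k = b then p else q) [0..<L])"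
proof (induction L arbitrary: b)
  case 0 then show ?case by simp
next
  case (Suc L)
  have "[0..<Suc L] = 0 # map Suc [0..<L]" by (simp add: map_Suc_upt upt_conv_Cons)
  then show ?case using Suc[of "\<not> b"] by (simp add: o_def)
qed

definition Tm :: "real \<Rightarrow> real \<Rightarrow> (nat \<Rightarrow> real) \<Rightarrow> nat \<Rightarrow> real" where
  "Tm a t f L = (if L = 0 then t * f 0 + (a*t*(1-t)) * f 1 + (a*t*(1-a)*(1-t)) * f 2
     else if L = 1 then a * f 0 + (a + t - 2*a*t) * f 1 + (a*t*(1-a)*(1-t)) * f 3
     else f (L-2) + (a + t - 2*a*t) * f L + (a*t*(1-a)*(1-t)) * f (L+2))"

primrec cdp :: "real \<Rightarrow> real \<Rightarrow> nat \<Rightarrow> nat \<Rightarrow> real" where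
  "cdp a t 0 = (\<lambda>L. if L = 0 then 1 else 0)"
| "cdp a t (Suc n) = Tm a t (cdp a t n)"

lemma Tm_lin: "Tm a t (\<lambda>L. g L + c * h L) L = Tm a t g L + c * Tm a t h L"
  by (simp add: Tm_def algebra_simps)

lemma Tm_zero: "(\<forall>L\<ge>N. f L = 0) \<Longrightarrow> L \<ge> N + 2 \<Longrightarrow> Tm a t f L = 0"
  by (simp add: Tm_def)

lemma cdp_support: "L \<ge> 2*n+1 \<Longrightarrow> cdp a t n L = 0"
proof (induction n arbitrary: L)
  case 0 then show ?case by simp
next
  case (Suc n)
  have "\<forall>L\<ge>2*n+1. cdp a t n L = 0" using Suc.IH by blast
  then show ?case using Suc.prems Tm_zero[of "2*n+1" "cdp a t n" L a t] by simp
qed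

definition lin :: "(nat \<Rightarrow> 'a::real_algebra_1) \<Rightarrow> (nat \<Rightarrow> real) \<Rightarrow> nat \<Rightarrow> 'a" where
  "lin V f N = (\<Sum>L<N. f L *\<^sub>R V L)"

lemma lin_Suc: "lin V f (Suc N) = lin V f N + f N *\<^sub>R V N"
  by (simp add: lin_def)

lemma lin_cong: "(\<And>L. L < N \<Longrightarrow> f L = g L) \<Longrightarrow> lin V f N = lin V g N"
  by (simp add: lin_def)

lemma lin_delta: "m < N \<Longrightarrow> lin V (\<lambda>L. if L = m then c else 0) N = c *\<^sub>R V m"
proof -
  assume "m < N"
  have "lin V (\<lambda>L. if L = m then c else 0) N = (\<Sum>L<N. if L = m then c *\<^sub>R V m else 0)"
    unfolding lin_def by (rule sum.cong) auto
  then show ?thesis using \<open>m < N\<close> by simp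
qed

lemma lin_add: "lin V (\<lambda>L. g L + c * h L) N = lin V g N + c *\<^sub>R lin V h N"
  by (simp add: lin_def sum.distrib scaleR_sum_right scaleR_add_left)

definition Aw :: "'a::real_algebra_1 \<Rightarrow> 'a \<Rightarrow> real \<Rightarrow> real \<Rightarrow> nat \<Rightarrow> 'a" where
  "Aw P Q a t L = wd (P - a *\<^sub>R 1) (Q - t *\<^sub>R 1) True L"
definition Bw :: "'a::real_algebra_1 \<Rightarrow> 'a \<Rightarrow> real \<Rightarrow> real \<Rightarrow> nat \<Rightarrow> 'a" where
  "Bw P Q a t L = wd (P - a *\<^sub>R 1) (Q - t *\<^sub>R 1) False L"
definition Vw :: "'a::real_algebra_1 \<Rightarrow> 'a \<Rightarrow> real \<Rightarrow> real \<Rightarrow> nat \<Rightarrow> 'a" where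
  "Vw P Q a t L = P * Bw P Q a t L"

context
  fixes P Q :: "'a::real_algebra_1" and a t :: real
  assumes PP: "P * P = P" and QQ: "Q * Q = Q"
begin

abbreviation "AA \<equiv> Aw P Q a t"
abbreviation "BB \<equiv> Bw P Q a t"
abbreviation "VV \<equiv> Vw P Q a t"

lemma AB0: "AA 0 = 1" "BB 0 = 1" by (simp_all add: Aw_def Bw_def)

lemma PB: "P * BB L = a *\<^sub>R BB L + AA (Suc L)"
  by (simp add: algebra_simps Aw_def Bw_def)

lemma QA: "Q * AA L = t *\<^sub>R AA L + BB (Suc L)"
  by (simp add: algebra_simps Aw_def Bw_def)

lemma QB: "Q * BB (Suc L) = (1-t) *\<^sub>R BB (Suc L) + (t*(1-t)) *\<^sub>R AA L"
proof -
  have "Q * BB (Suc L) = (Q * Q - t *\<^sub>R Q) * AA L" by (simp add: algebra_simps Aw_def Bw_def)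
  also have "\<dots> = (1-t) *\<^sub>R (Q * AA L)" using QQ by (simp add: algebra_simps)
  finally show ?thesis by (simp add: QA algebra_simps flip: scaleR_add_left)
qed

lemma PA: "P * AA (Suc L) = (1-a) *\<^sub>R VV L"
proof -
  have "P * AA (Suc L) = (P * P - a *\<^sub>R P) * BB L" by (simp add: algebra_simps Aw_def Bw_def)
  also have "\<dots> = (1-a) *\<^sub>R (P * BB L)" using PP by (simp add: algebra_simps)
  finally show ?thesis by (simp add: Vw_def)
qed

lemma PA0: "P * AA 0 = VV 0" by (simp add: AB0 Vw_def)

lemma PQB0: "P * (Q * BB 0) = t *\<^sub>R VV 0 + VV 1"
proof -
  have "Q * BB 0 = t *\<^sub>R AA 0 + BB 1" using QA[of 0] by (simp add: AB0)
  then have "P * (Q * BB 0) = P * (t *\<^sub>R AA 0 + BB 1)" by (simp only:)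
  then show ?thesis by (simp add: algebra_simps Vw_def AB0)
qed

lemma PQBS: "P * (Q * BB (Suc L)) = (1-t) *\<^sub>R VV (Suc L) + (t*(1-t)) *\<^sub>R (P * AA L)"
  by (simp add: QB algebra_simps Vw_def)

lemma PQV: "P * (Q * VV L) = a *\<^sub>R (P * (Q * BB L)) + (t*(1-a)) *\<^sub>R VV L + VV (L+2)"
proof -
  have "Q * VV L = a *\<^sub>R (Q * BB L) + t *\<^sub>R AA (Suc L) + BB (Suc (Suc L))"
    unfolding Vw_def by (simp only: mult.assoc[symmetric] PB) (simp add: algebra_simps QA)
  then have "P * (Q * VV L) = a *\<^sub>R (P * (Q * BB L)) + t *\<^sub>R (P * AA (Suc L)) + VV (Suc (Suc L))"
    by (simp add: algebra_simps Vw_def)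
  then show ?thesis by (simp add: PA)
qed

lemma PQV0: "P * (Q * VV 0) = t *\<^sub>R VV 0 + a *\<^sub>R VV 1 + VV 2"
proof -
  have "P * (Q * VV 0) = a *\<^sub>R (t *\<^sub>R VV 0 + VV 1) + (t*(1-a)) *\<^sub>R VV 0 + VV 2"
    using PQV[of 0] PQB0 by (simp add: numeral_2_eq_2)
  also have "\<dots> = (a*t + t*(1-a)) *\<^sub>R VV 0 + a *\<^sub>R VV 1 + VV 2"
    by (simp add: scaleR_add_left scaleR_add_right add_ac)
  also have "a*t + t*(1-a) = t" by (simp add: algebra_simps)
  finally show ?thesis .
qed

lemma PQV1: "P * (Q * VV 1) = (a*t*(1-t)) *\<^sub>R VV 0 + (a + t - 2*a*t) *\<^sub>R VV 1 + VV 3"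
proof -
  have "P * (Q * VV 1) = a *\<^sub>R ((1-t) *\<^sub>R VV 1 + (t*(1-t)) *\<^sub>R VV 0) + (t*(1-a)) *\<^sub>R VV 1 + VV 3"
    using PQV[of 1] PQBS[of 0] PA0 by (simp add: numeral_3_eq_3)
  also have "\<dots> = (a*(t*(1-t))) *\<^sub>R VV 0 + (a*(1-t) + t*(1-a)) *\<^sub>R VV 1 + VV 3"
    by (simp add: scaleR_add_left scaleR_add_right add_ac)
  also have "a*(1-t) + t*(1-a) = a + t - 2*a*t" by (simp add: algebra_simps)
  finally show ?thesis by (simp add: mult.assoc)
qed

lemma PQVSS: "P * (Q * VV (Suc (Suc M))) = (a*t*(1-a)*(1-t)) *\<^sub>R VV M + (a + t - 2*a*t) *\<^sub>R VV (Suc (Suc M)) + VV (M+4)"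
proof -
  have "P * (Q * VV (Suc (Suc M))) = a *\<^sub>R ((1-t) *\<^sub>R VV (Suc (Suc M)) + (t*(1-t)) *\<^sub>R ((1-a) *\<^sub>R VV M)) + (t*(1-a)) *\<^sub>R VV (Suc (Suc M)) + VV (M+4)"
    using PQV[of "Suc (Suc M)"] PQBS[of "Suc M"] PA[of M] by (simp add: eval_nat_numeral)
  also have "\<dots> = (a*(t*(1-t)*(1-a))) *\<^sub>R VV M + (a*(1-t) + t*(1-a)) *\<^sub>R VV (Suc (Suc M)) + VV (M+4)"
    by (simp add: scaleR_add_left scaleR_add_right add_ac)
  also have "a*(1-t) + t*(1-a) = a + t - 2*a*t" by (simp add: algebra_simps)
  also have "a*(t*(1-t)*(1-a)) = a*t*(1-a)*(1-t)" by (simp add: algebra_simps)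
  finally show ?thesis .
qed

lemma lin_Te: "lin VV (Tm a t (\<lambda>L. if L = N then 1 else 0)) (N+3) = P * (Q * VV N)"
proof (cases N)
  case 0
  then show ?thesis by (simp add: lin_Suc eval_nat_numeral Tm_def PQV0 lin_def)
next
  case (Suc N1)
  show ?thesis
  proof (cases N1)
    case 0
    then show ?thesis using Suc
      by (simp add: lin_Suc eval_nat_numeral Tm_def PQV1[unfolded One_nat_def numeral_3_eq_3] lin_def)
  next
    case (Suc M)
    have e: "Tm a t (\<lambda>L. if L = N then 1 else 0) = (\<lambda>L. (if L = M then a*t*(1-a)*(1-t) else 0) + 1 * (if L = M+2 then a + t - 2*a*t else 0) + 1 * (if L = M+4 then 1 else 0))"
      using Suc \<open>N = Suc N1\<close> by (auto simp: Tm_def fun_eq_iff)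
    have "lin VV (Tm a t (\<lambda>L. if L = N then 1 else 0)) (N+3) =
      (a*t*(1-a)*(1-t)) *\<^sub>R VV M + (a + t - 2*a*t) *\<^sub>R VV (M+2) + VV (M+4)"
      unfolding e lin_add using Suc \<open>N = Suc N1\<close> by (simp add: lin_delta)
    then show ?thesis using PQVSS[of M] Suc \<open>N = Suc N1\<close> by simp
  qed
qed

lemma key_step: "(\<forall>L\<ge>N. f L = 0) \<Longrightarrow> P * (Q * lin VV f N) = lin VV (Tm a t f) (N+2)"
proof (induction N arbitrary: f)
  case 0
  then have "f = (\<lambda>_. 0)" by auto
  then show ?case by (simp add: lin_def Tm_def)
next
  case (Suc N)
  define g where "g = f(N := 0)"
  have g0: "\<forall>L\<ge>N. g L = 0" using Suc.prems by (auto simp: g_def)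
  have fg: "f = (\<lambda>L. g L + f N * (if L = N then 1 else 0))" by (auto simp: g_def fun_eq_iff)
  have l1: "lin VV f (Suc N) = lin VV g N + f N *\<^sub>R VV N"
    unfolding lin_Suc by (simp add: g_def lin_def)
  have Tf: "Tm a t f = (\<lambda>L. Tm a t g L + f N * Tm a t (\<lambda>L. if L = N then 1 else 0) L)"
  proof (rule ext)
    fix L
    show "Tm a t f L = Tm a t g L + f N * Tm a t (\<lambda>L. if L = N then 1 else 0) L"
      by (subst fg, rule Tm_lin)
  qed
  have "lin VV (Tm a t g) (Suc (N+2)) = lin VV (Tm a t g) (N+2)"
    using Tm_zero[OF g0, of "N+2" a t] by (simp only: lin_Suc) simp
  then have l2: "lin VV (Tm a t g) (N+3) = lin VV (Tm a t g) (N+2)" by (simp add: eval_nat_numeral)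
  have "P * (Q * lin VV f (Suc N)) = lin VV (Tm a t g) (N+2) + f N *\<^sub>R (P * (Q * VV N))"
    unfolding l1 using Suc.IH[OF g0] by (simp add: algebra_simps)
  also have "\<dots> = lin VV (Tm a t f) (Suc N + 2)"
    unfolding Tf lin_add using l2 lin_Te[of N] by (simp add: eval_nat_numeral)
  finally show ?case .
qed

lemma expand: "(P * Q) ^ n * P = lin VV (cdp a t n) (2*n+1)"
proof (induction n)
  case 0
  then show ?case by (simp add: lin_def Vw_def AB0)
next
  case (Suc n)
  have "(P * Q) ^ Suc n * P = P * (Q * ((P * Q) ^ n * P))" by (simp add: mult.assoc)
  also have "\<dots> = lin VV (Tm a t (cdp a t n)) (2*n+1+2)"
    unfolding Suc.IH by (rule key_step) (simp add: cdp_support)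
  finally show ?case by simp
qed

end

function motz :: "complex \<Rightarrow> complex \<Rightarrow> nat \<Rightarrow> complex" where
  "motz b k n = (if n = 0 then 1 else b * motz b k (n - 1) +
     (if n < 2 then 0 else k * (\<Sum>i\<le>n-2. motz b k i * motz b k (n - 2 - i))))"
  by auto
termination by (relation "Wellfounded.measure (\<lambda>(b,k,n). n)") auto

declare motz.simps[simp del]

definition Mf :: "complex \<Rightarrow> complex \<Rightarrow> complex fps" where
  "Mf b k = Abs_fps (motz b k)"

lemma Mf_eq: "Mf b k = 1 + fps_const b * (fps_X * Mf b k) + fps_const k * (fps_X^2 * (Mf b k)^2)"
proof (rule fps_ext)
  fix n
  have sq: "((Mf b k)^2) $ m = (\<Sum>i\<le>m. motz b k i * motz b k (m - i))" for m
    by (simp add: power2_eq_square fps_mult_nth atLeast0AtMost Mf_def)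
  show "Mf b k $ n = (1 + fps_const b * (fps_X * Mf b k) + fps_const k * (fps_X^2 * (Mf b k)^2)) $ n"
  proof (cases "n < 2")
    case True
    then show ?thesis
      by (cases n) (auto simp: Mf_def fps_X_power_mult_nth motz.simps)
  next
    case False
    then show ?thesis
      by (simp add: fps_X_power_mult_nth sq) (simp add: Mf_def motz.simps[of b k n])
  qed
qed

lemma quad_aux:
  fixes A T X M C D :: "complex fps"
  assumes CD: "C * D = 1"
    and D: "D = 1 - T * X - (A*T*(1-T)) * X^2 * M"
    and M: "M = 1 + (A*(1-T) + T*(1-A)) * (X * M) + (A*T*(1-A)*(1-T)) * (X^2 * M^2)"
  shows "X * C * (T + A * (C - 1)) = (C - 1) * (1 + A * (C - 1))"
  using assms by algebra

definition bb :: "complex \<Rightarrow> complex \<Rightarrow> complex" where "bb a t = a*(1-t) + t*(1-a)"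
definition kk :: "complex \<Rightarrow> complex \<Rightarrow> complex" where "kk a t = a*t*(1-a)*(1-t)"
definition gg :: "complex \<Rightarrow> complex \<Rightarrow> complex" where "gg a t = a*t*(1-t)"
definition "MM a t = Mf (bb a t) (kk a t)"
definition "DD a t = 1 - fps_const t * fps_X - fps_const (gg a t) * fps_X^2 * MM a t"
definition "CC a t = inverse (DD a t)"
definition "Fv a t L = (if even L then CC a t * (fps_X * MM a t)^(L div 2)
   else fps_const a * fps_X * CC a t * MM a t * (fps_X * MM a t)^(L div 2))"

lemma DD0: "DD a t $ 0 = 1" by (simp add: DD_def)
lemma CD: "CC a t * DD a t = 1" unfolding CC_def by (rule inverse_mult_eq_1) (simp add: DD0)
lemma CC0: "CC a t $ 0 = 1" unfolding CC_def by (simp add: DD0)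

lemma MM_eq: "MM a t = 1 + fps_const (bb a t) * (fps_X * MM a t) + fps_const (kk a t) * (fps_X^2 * (MM a t)^2)"
  unfolding MM_def by (rule Mf_eq)

lemma fc_ops: "fps_const (x*y) = fps_const x * fps_const (y::complex)"
  "fps_const (x+y) = fps_const x + fps_const y" "fps_const (x-y) = fps_const x - fps_const y"
  "fps_const (1::complex) = 1"
  by simp_all

lemma consts_expand:
  "fps_const (bb a t) = fps_const a * (1 - fps_const t) + fps_const t * (1 - fps_const a)"
  "fps_const (kk a t) = fps_const a * fps_const t * (1 - fps_const a) * (1 - fps_const t)"
  "fps_const (gg a t) = fps_const a * fps_const t * (1 - fps_const t)"
  by (simp_all only: bb_def kk_def gg_def fc_ops)

lemma R0_aux:
  fixes A T X M C D :: "complex fps"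
  assumes "C * D = 1" "D = 1 - T * X - (A*T*(1-T)) * X^2 * M"
  shows "C = 1 + X * (T * C + (A*T*(1-T)) * (A * X * C * M) + (A*T*(1-A)*(1-T)) * (C * (X * M)))"
  using assms by algebra

lemma R1_aux:
  fixes A T X M C :: "complex fps"
  assumes "M = 1 + (A*(1-T) + T*(1-A)) * (X * M) + (A*T*(1-A)*(1-T)) * (X^2 * M^2)"
  shows "A * X * C * M = X * (A * C + (A*(1-T) + T*(1-A)) * (A * X * C * M) + (A*T*(1-A)*(1-T)) * (A * X * C * M * (X * M)))"
  using assms by algebra

lemma RS_aux:
  fixes A T X M C Y Z :: "complex fps"
  assumes "M = 1 + (A*(1-T) + T*(1-A)) * (X * M) + (A*T*(1-A)*(1-T)) * (X^2 * M^2)"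
  shows "Z * ((X * M) * Y) = X * (Z * Y + (A*(1-T) + T*(1-A)) * (Z * ((X * M) * Y)) + (A*T*(1-A)*(1-T)) * (Z * ((X * M) * ((X * M) * Y))))"
  using assms by algebra

lemma R0: "Fv a t 0 = 1 + fps_X * (fps_const t * Fv a t 0 + fps_const (gg a t) * Fv a t 1 + fps_const (kk a t) * Fv a t 2)"
  unfolding Fv_def consts_expand using R0_aux[OF CD DD_def[unfolded consts_expand]] by simp

lemma R1: "Fv a t 1 = fps_X * (fps_const a * Fv a t 0 + fps_const (bb a t) * Fv a t 1 + fps_const (kk a t) * Fv a t 3)"
  unfolding Fv_def consts_expand using R1_aux[OF MM_eq[unfolded consts_expand], where C="CC a t"]
  by (simp add: numeral_3_eq_3)

lemma RS: "Fv a t (Suc (Suc L)) = fps_X * (Fv a t L + fps_const (bb a t) * Fv a t (Suc (Suc L)) + fps_const (kk a t) * Fv a t (L+4))"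
proof (cases "even L")
  case True
  have d: "Suc (Suc L) div 2 = Suc (L div 2)" "(L + 4) div 2 = Suc (Suc (L div 2))" using True by auto
  show ?thesis unfolding Fv_def consts_expand using True d
    RS_aux[OF MM_eq[unfolded consts_expand], where Z="CC a t" and Y="(fps_X * MM a t)^(L div 2)"]
    by (simp del: power_Suc add: power_Suc[of "fps_X * MM a t"])
next
  case False
  have d: "Suc (Suc L) div 2 = Suc (L div 2)" "(L + 4) div 2 = Suc (Suc (L div 2))" using False by presburger+
  show ?thesis unfolding Fv_def consts_expand using False d
    RS_aux[OF MM_eq[unfolded consts_expand], where Z="fps_const a * fps_X * CC a t * MM a t" and Y="(fps_X * MM a t)^(L div 2)"]
    by (simp del: power_Suc add: power_Suc[of "fps_X * MM a t"])
qed

lemma Fv_nth0: "Fv a t L $ 0 = (if L = 0 then 1 else 0)"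
  by (auto simp: Fv_def CC0 fps_nth_power_0)

lemma Fv_cdp: "Fv (of_real a) (of_real t) L $ n = of_real (cdp a t n L)"
proof (induction n arbitrary: L)
  case 0
  then show ?case by (simp add: Fv_nth0)
next
  case (Suc n)
  let ?F = "Fv (of_real a) (of_real t)"
  consider "L = 0" | "L = 1" | L2 where "L = Suc (Suc L2)"
    by (metis One_nat_def not0_implies_Suc)
  then show ?case
  proof cases
    case 1
    have "?F 0 $ Suc n = of_real t * ?F 0 $ n + gg (of_real a) (of_real t) * ?F 1 $ n
        + kk (of_real a) (of_real t) * ?F 2 $ n"
      by (subst R0) simp
    also have "\<dots> = of_real (cdp a t (Suc n) 0)"
      unfolding Suc.IH by (simp add: Tm_def gg_def kk_def)
    finally show ?thesis using 1 by simp
  next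
    case 2
    have "?F 1 $ Suc n = of_real a * ?F 0 $ n + bb (of_real a) (of_real t) * ?F 1 $ n
        + kk (of_real a) (of_real t) * ?F 3 $ n"
      by (subst R1) simp
    also have "\<dots> = of_real (cdp a t (Suc n) 1)"
      unfolding Suc.IH by (simp add: Tm_def bb_def kk_def algebra_simps)
    finally show ?thesis using 2 by simp
  next
    case 3
    have "?F (Suc (Suc L2)) $ Suc n = ?F L2 $ n + bb (of_real a) (of_real t) * ?F (Suc (Suc L2)) $ n
        + kk (of_real a) (of_real t) * ?F (L2+4) $ n"
      by (subst RS) simp
    also have "\<dots> = of_real (cdp a t (Suc n) (Suc (Suc L2)))"
      unfolding Suc.IH by (simp add: Tm_def bb_def kk_def algebra_simps eval_nat_numeral)
    finally show ?thesis using 3 by simp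
  qed
qed

lemma CC_cdp: "CC (of_real a) (of_real t) $ n = of_real (cdp a t n 0)"
  using Fv_cdp[of a t 0 n] by (simp add: Fv_def)

lemma CC_quad: "fps_X * CC a t * (fps_const t + fps_const a * (CC a t - 1)) = (CC a t - 1) * (1 + fps_const a * (CC a t - 1))"
  by (rule quad_aux[OF CD DD_def[unfolded consts_expand] MM_eq[unfolded consts_expand]])

lemma w3: "0 \<le> w1 \<Longrightarrow> w1 \<le> 1 \<Longrightarrow> 0 \<le> w2 \<Longrightarrow> w2 \<le> 1 \<Longrightarrow> 0 \<le> w3 \<Longrightarrow> w3 \<le> 1 \<Longrightarrow>
  0 \<le> x1 \<Longrightarrow> x1 \<le> B \<Longrightarrow> 0 \<le> x2 \<Longrightarrow> x2 \<le> B \<Longrightarrow> 0 \<le> x3 \<Longrightarrow> x3 \<le> B \<Longrightarrow>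
  0 \<le> w1*x1 + w2*x2 + w3*x3 \<and> w1*x1 + w2*x2 + w3*x3 \<le> 3 * (B::real)"
proof -
  assume h: "0 \<le> w1" "w1 \<le> 1" "0 \<le> w2" "w2 \<le> 1" "0 \<le> w3" "w3 \<le> 1"
    "0 \<le> x1" "x1 \<le> B" "0 \<le> x2" "x2 \<le> B" "0 \<le> x3" "x3 \<le> B"
  have "w1*x1 \<le> x1" "w2*x2 \<le> x2" "w3*x3 \<le> x3" using h by (simp_all add: mult_left_le_one_le)
  moreover have "0 \<le> w1*x1" "0 \<le> w2*x2" "0 \<le> w3*x3" using h by simp_all
  ultimately show ?thesis using h by linarith
qed

lemma unit_prod: "0 \<le> (x::real) \<Longrightarrow> x \<le> 1 \<Longrightarrow> 0 \<le> y \<Longrightarrow> y \<le> 1 \<Longrightarrow> 0 \<le> x*y \<and> x*y \<le> 1"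
  by (simp add: mult_le_one)

lemma cdp_bound:
  assumes "0 \<le> a" "a \<le> 1" "0 \<le> t" "t \<le> 1"
  shows "0 \<le> cdp a t n L \<and> cdp a t n L \<le> 3^n"
proof (induction n arbitrary: L)
  case 0 then show ?case by simp
next
  case (Suc n)
  have at: "0 \<le> a*t \<and> a*t \<le> 1" using assms by (intro unit_prod) auto
  have g: "0 \<le> a*t*(1-t) \<and> a*t*(1-t) \<le> 1" using assms at by (intro unit_prod) auto
  have at2: "0 \<le> a*t*(1-a) \<and> a*t*(1-a) \<le> 1" using assms at by (intro unit_prod) auto
  have k: "0 \<le> a*t*(1-a)*(1-t) \<and> a*t*(1-a)*(1-t) \<le> 1" using assms at2 by (intro unit_prod) auto
  have b: "0 \<le> a + t - 2*a*t \<and> a + t - 2*a*t \<le> 1"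
  proof
    have "0 \<le> a*(1-t) + t*(1-a)" using assms by simp
    then show "0 \<le> a + t - 2*a*t" by (simp add: algebra_simps)
    have "0 \<le> (1-a)*(1-t) + a*t" using assms by simp
    then show "a + t - 2*a*t \<le> 1" by (simp add: algebra_simps)
  qed
  have one: "0 \<le> (1::real) \<and> (1::real) \<le> 1" by simp
  show ?case
    using w3[of t "a*t*(1-t)" "a*t*(1-a)*(1-t)" "cdp a t n 0" "3^n" "cdp a t n 1" "cdp a t n 2"]
      w3[of a "a + t - 2*a*t" "a*t*(1-a)*(1-t)" "cdp a t n 0" "3^n" "cdp a t n 1" "cdp a t n 3"]
      w3[of 1 "a + t - 2*a*t" "a*t*(1-a)*(1-t)" "cdp a t n (L-2)" "3^n" "cdp a t n L" "cdp a t n (L+2)"]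
      Suc.IH g k b assms
    by (auto simp: Tm_def)
qed

lemma cont_agree:
  fixes f g :: "complex \<Rightarrow> complex"
  assumes "isCont f 0" "isCont g 0" "d > 0" "\<And>w. w \<noteq> 0 \<Longrightarrow> norm w < d \<Longrightarrow> f w = g w"
  shows "f 0 = g 0"
proof -
  have ev: "\<forall>\<^sub>F w in at 0. f w = g w"
    unfolding eventually_at using assms(3,4) by (auto simp: dist_norm)
  have "(g \<longlongrightarrow> f 0) (at 0)" using assms(1) ev by (simp add: isCont_def tendsto_cong)
  moreover have "(g \<longlongrightarrow> g 0) (at 0)" using assms(2) by (simp add: isCont_def)
  ultimately show ?thesis by (rule LIM_unique)
qed

lemma isCont_small:
  fixes h :: "complex \<Rightarrow> complex"
  assumes "isCont h 0" "e > 0"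
  shows "\<exists>d>0. \<forall>w. norm w < d \<longrightarrow> norm (h w - h 0) < e"
  using assms unfolding continuous_at_eps_delta by (simp add: dist_norm)

lemma S_unique:
  fixes m :: "nat \<Rightarrow> complex" and F D N0 S :: "complex \<Rightarrow> complex"
  assumes rho: "\<rho> > 0"
    and sm: "\<And>x. norm x < \<rho> \<Longrightarrow> (\<lambda>n. m n * x^n) sums F x"
    and rel: "\<And>x w. norm x < \<rho> \<Longrightarrow> F x = 1 + w \<Longrightarrow> x * D w = w * N0 w"
    and cD: "isCont D 0" and cN: "isCont N0 0" and D0: "D 0 \<noteq> 0"
    and S: "is_S_transform m S"
  shows "\<forall>\<^sub>F w in nhds 0. S w = (1 + w) * N0 w / D w"
proof -
  from S obtain r eta where r: "r>0" "eta 0 = 0" "continuous_on (ball 0 r) eta"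
    "\<forall>w\<in>ball 0 r. (\<lambda>n. m n * eta w ^ n) sums (1 + w)"
    "\<forall>w\<in>ball 0 r. w \<noteq> 0 \<longrightarrow> S w = (1 + w) / w * eta w" "isCont S 0"
    unfolding is_S_transform_def by blast
  have ce: "isCont eta 0" using r(1,3) by (intro continuous_on_interior[of "ball 0 r"]) auto
  obtain d1 where d1: "d1 > 0" "\<forall>w. norm w < d1 \<longrightarrow> norm (eta w - eta 0) < \<rho>"
    using isCont_small[OF ce rho] by blast
  have nD: "norm (D 0) > 0" using D0 by simp
  obtain d2 where d2: "d2 > 0" "\<forall>w. norm w < d2 \<longrightarrow> norm (D w - D 0) < norm (D 0)"
    using isCont_small[OF cD nD] by blast
  define G where "G w = (1 + w) * N0 w / D w" for w
  have cG: "isCont G 0" unfolding G_def using cD cN D0 by (intro continuous_intros) auto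
  define \<delta> where "\<delta> = min r (min d1 d2)"
  have \<delta>: "\<delta> > 0" using r(1) d1(1) d2(1) by (simp add: \<delta>_def)
  have key: "S w = G w" if w: "norm w < \<delta>" "w \<noteq> 0" for w
  proof -
    have wb: "w \<in> ball 0 r" using w by (simp add: \<delta>_def)
    have ne: "norm (eta w) < \<rho>" using d1(2) w r(2) by (simp add: \<delta>_def)
    have Dw: "D w \<noteq> 0"
    proof
      assume "D w = 0"
      then show False using d2(2)[rule_format, of w] w by (simp add: \<delta>_def)
    qed
    have "F (eta w) = 1 + w" using sums_unique2[OF sm[OF ne] bspec[OF r(4) wb]] .
    then have "eta w * D w = w * N0 w" by (rule rel[OF ne])
    then have ew: "eta w = w * N0 w / D w" using Dw by (simp add: field_simps)
    have Sw: "S w = (1 + w) / w * eta w" using r(5) wb w(2) by blast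
    show ?thesis unfolding Sw ew G_def using w(2) Dw by (simp add: field_simps)
  qed
  have "S 0 = G 0" by (rule cont_agree[OF r(6) cG \<delta>]) (use key in auto)
  then have "\<forall>w. dist w 0 < \<delta> \<longrightarrow> S w = G w" using key by (auto simp: dist_norm)
  then show ?thesis unfolding eventually_nhds_metric G_def using \<delta> by blast
qed

lemma S_exists:
  fixes m :: "nat \<Rightarrow> complex" and F D N0 :: "complex \<Rightarrow> complex"
  assumes rho: "\<rho> > 0"
    and sm: "\<And>x. norm x < \<rho> \<Longrightarrow> (\<lambda>n. m n * x^n) sums F x"
    and m1: "m 1 \<noteq> 0"
    and cD: "continuous_on UNIV D" and cN: "continuous_on UNIV N0" and D0: "D 0 \<noteq> 0"
    and root: "\<exists>r1>0. \<forall>x w. norm x < r1 \<longrightarrow> norm w < r1 \<longrightarrow> x * D w = w * N0 w \<longrightarrow> F x = 1 + w"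
  shows "\<exists>S. is_S_transform m S"
proof -
  obtain r1 where r1: "r1 > 0" "\<forall>x w. norm x < r1 \<longrightarrow> norm w < r1 \<longrightarrow> x * D w = w * N0 w \<longrightarrow> F x = 1 + w"
    using root by blast
  define eta where "eta w = w * N0 w / D w" for w
  define S where "S w = (1 + w) * N0 w / D w" for w
  have cD0: "isCont D 0" using cD by (simp add: continuous_on_eq_continuous_at)
  have cN0: "isCont N0 0" using cN by (simp add: continuous_on_eq_continuous_at)
  have ce: "isCont eta 0" unfolding eta_def using cD0 cN0 D0 by (intro continuous_intros) auto
  have e0: "eta 0 = 0" by (simp add: eta_def)
  have mr: "min \<rho> r1 > 0" using rho r1 by simp
  obtain d1 where d1: "d1 > 0" "\<forall>w. norm w < d1 \<longrightarrow> norm (eta w - eta 0) < min \<rho> r1"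
    using isCont_small[OF ce mr] by blast
  have nD: "norm (D 0) > 0" using D0 by simp
  obtain d2 where d2: "d2 > 0" "\<forall>w. norm w < d2 \<longrightarrow> norm (D w - D 0) < norm (D 0)"
    using isCont_small[OF cD0 nD] by blast
  define r where "r = min r1 (min d1 d2)"
  have r: "r > 0" using r1 d1 d2 by (simp add: r_def)
  have Dnz: "D w \<noteq> 0" if "norm w < r" for w
  proof
    assume "D w = 0"
    then show False using d2(2)[rule_format, of w] that by (simp add: r_def)
  qed
  have "is_S_transform m S"
    unfolding is_S_transform_def
  proof (intro conjI exI[of _ r] exI[of _ eta])
    show "m 1 \<noteq> 0" by (rule m1)
    show "r > 0" by (rule r)
    show "eta 0 = 0" by (rule e0)
    show "continuous_on (ball 0 r) eta" unfolding eta_def using Dnz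
      by (intro continuous_intros continuous_on_subset[OF cD] continuous_on_subset[OF cN]) auto
    show "\<forall>w\<in>ball 0 r. (\<lambda>n. m n * eta w ^ n) sums (1 + w)"
    proof
      fix w :: complex assume "w \<in> ball 0 r"
      then have w: "norm w < r" by simp
      have ne: "norm (eta w) < min \<rho> r1" using d1(2) w e0 by (simp add: r_def)
      have "eta w * D w = w * N0 w" using Dnz[OF w] by (simp add: eta_def)
      then have "F (eta w) = 1 + w" using r1(2) ne w by (simp add: r_def)
      then show "(\<lambda>n. m n * eta w ^ n) sums (1 + w)" using sm[of "eta w"] ne by simp
    qed
    show "\<forall>w\<in>ball 0 r. w \<noteq> 0 \<longrightarrow> S w = (1 + w) / w * eta w"
      by (auto simp: S_def eta_def)
    show "isCont S 0" unfolding S_def using cD0 cN0 D0 by (intro continuous_intros) auto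
  qed
  then show ?thesis by blast
qed

lemma ev_scale:
  fixes c :: complex
  assumes "\<forall>\<^sub>F w in nhds 0. P w"
  shows "\<forall>\<^sub>F z in nhds 0. P (c * z)"
proof -
  have "((\<lambda>z. c * z) \<longlongrightarrow> c * 0) (nhds (0::complex))"
    by (rule tendsto_mult_left) (rule filterlim_ident)
  then have "filterlim (\<lambda>z. c * z) (nhds 0) (nhds (0::complex))" by simp
  then show ?thesis using assms by (simp add: filterlim_iff)
qed

lemma sp_facts:
  assumes "star_prob_space st tau"
  shows "tau (x + y) = tau x + tau y" "tau (r *\<^sub>R x) = r * tau x" "tau 1 = 1"
    "tau (x - y) = tau x - tau y" "tau 0 = 0"
proof -
  show a: "tau (x + y) = tau x + tau y" "tau (r *\<^sub>R x) = r * tau x" "tau 1 = 1"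
    using assms by (auto simp: star_prob_space_def)
  have add: "\<And>u v. tau (u+v) = tau u + tau v"
    using assms by (auto simp: star_prob_space_def)
  have "tau x = tau ((x - y) + y)" by simp
  also have "\<dots> = tau (x - y) + tau y" by (rule add)
  finally show "tau (x - y) = tau x - tau y" by simp
  have sc: "\<And>r u. tau (r *\<^sub>R u) = r * tau u"
    using assms by (auto simp: star_prob_space_def)
  have "tau 0 = tau (0 *\<^sub>R 0)" by simp
  also have "\<dots> = 0 * tau 0" by (rule sc)
  finally show "tau 0 = 0" by simp
qed

lemma tau_lin:
  assumes "star_prob_space st tau"
  shows "tau (lin V f N) = (\<Sum>L<N. f L * tau (V L))"
  by (induction N) (auto simp: lin_Suc sp_facts[OF assms] lin_def)

lemma centered_in:
  fixes P :: "'a::real_algebra_1"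
  shows "P - a *\<^sub>R 1 \<in> alg_gen P"
proof -
  have "P - a *\<^sub>R 1 = (\<Sum>i<2. (\<lambda>i. if i = 0 then -a else 1) i *\<^sub>R P ^ i)"
    by (simp add: eval_nat_numeral)
  then show ?thesis unfolding alg_gen_def
    by (intro CollectI exI[of _ 2] exI[of _ "\<lambda>i. if i = 0 then -a else 1"])
qed

lemma free_word:
  fixes P Q :: "'a::real_algebra_1"
  assumes sp: "star_prob_space st tau" and fr: "free_pair tau P Q" and "tau P = a" "tau Q = t"
  shows "tau (wd (P - a *\<^sub>R 1) (Q - t *\<^sub>R 1) b (Suc L)) = 0"
proof -
  define x where "x (k::nat) = (if even k = b then P - a *\<^sub>R 1 else Q - t *\<^sub>R 1)" for k
  define ix where "ix (k::nat) = (even k = b)" for k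
  have tP: "tau (P - a *\<^sub>R 1) = 0" and tQ: "tau (Q - t *\<^sub>R 1) = 0"
    using assms by (simp_all add: sp_facts[OF sp])
  have c1: "\<forall>k<Suc L. x k \<in> (if ix k then alg_gen P else alg_gen Q) \<and> tau (x k) = 0"
  proof (intro allI impI)
    fix k assume "k < Suc L"
    show "x k \<in> (if ix k then alg_gen P else alg_gen Q) \<and> tau (x k) = 0"
    proof (cases "even k = b")
      case True then show ?thesis using centered_in[of P a] tP by (simp add: x_def ix_def)
    next
      case False then show ?thesis using centered_in[of Q t] tQ by (simp add: x_def ix_def)
    qed
  qed
  have c2: "\<forall>k. Suc k < Suc L \<longrightarrow> ix k \<noteq> ix (Suc k)" by (simp add: ix_def)
  have h: "Suc L \<ge> 1 \<longrightarrow> (\<forall>k<Suc L. x k \<in> (if ix k then alg_gen P else alg_gen Q) \<and> tau (x k) = 0) \<longrightarrow>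
     (\<forall>k. Suc k < Suc L \<longrightarrow> ix k \<noteq> ix (Suc k)) \<longrightarrow> tau (prod_list (map x [0..<Suc L])) = 0"
    using fr[unfolded free_pair_def, THEN spec[where x="Suc L"], THEN spec[where x=x], THEN spec[where x=ix]] .
  have "tau (prod_list (map x [0..<Suc L])) = 0"
    using h c1 c2 by simp
  then show ?thesis by (simp only: wd_prod_list x_def[abs_def])
qed

lemma tau_V:
  fixes P Q :: "'a::real_algebra_1"
  assumes sp: "star_prob_space st tau" and fr: "free_pair tau P Q" and a: "tau P = a" and t: "tau Q = t"
  shows "tau (Vw P Q a t L) = (if L = 0 then a else 0)"
proof -
  have "Vw P Q a t L = a *\<^sub>R Bw P Q a t L + Aw P Q a t (Suc L)"
    by (simp add: Vw_def Aw_def Bw_def algebra_simps)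
  moreover have "tau (Aw P Q a t (Suc L)) = 0"
    unfolding Aw_def by (rule free_word[OF sp fr a t])
  moreover have "tau (Bw P Q a t L) = (if L = 0 then 1 else 0)"
  proof (cases L)
    case 0 then show ?thesis using sp_facts[OF sp] by (simp add: Bw_def)
  next
    case (Suc L1) then show ?thesis unfolding Bw_def using free_word[OF sp fr a t, of False L1] by (simp del: wd.simps)
  qed
  ultimately show ?thesis using sp_facts[OF sp] by simp
qed

lemma PQP_pow:
  fixes P Q :: "'a::real_algebra_1"
  assumes PP: "P * P = P"
  shows "(P * Q * P) ^ Suc n = (P * Q) ^ Suc n * P"
proof (induction n)
  case 0 then show ?case by simp
next
  case (Suc n)
  have h: "P * (P * Q) ^ Suc n = (P * Q) ^ Suc n"
    by (simp only: power_Suc mult.assoc[symmetric] PP)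
  have "(P*Q*P)^Suc (Suc n) = (P*Q*P) * (P*Q*P)^Suc n" by (rule power_Suc)
  also have "\<dots> = (P*Q*P) * ((P*Q)^Suc n * P)" by (simp only: Suc.IH)
  also have "\<dots> = (P*Q) * (P * (P*Q)^Suc n) * P" by (simp only: mult.assoc)
  also have "\<dots> = (P*Q) * (P*Q)^Suc n * P" by (simp only: h)
  also have "\<dots> = (P*Q)^Suc (Suc n) * P" by (simp only: power_Suc)
  finally show ?case .
qed

lemma moments_CC:
  fixes P Q :: "'a::real_algebra_1"
  assumes sp: "star_prob_space st tau" and fr: "free_pair tau P Q" and a: "tau P = a" and t: "tau Q = t"
    and PP: "P * P = P" and QQ: "Q * Q = Q" and a0: "a \<noteq> 0"
  shows "(if n = 0 then 1 else complex_of_real (tau ((P * Q * P) ^ n) / tau P)) = CC (of_real a) (of_real t) $ n"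
proof (cases n)
  case 0 then show ?thesis by (simp add: CC0)
next
  case (Suc n1)
  have "(P * Q * P) ^ n = (P * Q) ^ n * P" using PQP_pow[OF PP, of Q n1] Suc by (simp only:)
  then have "tau ((P * Q * P) ^ n) = tau (lin (Vw P Q a t) (cdp a t n) (2*n+1))"
    by (simp only: expand[OF PP QQ, where a=a and t=t and n=n])
  also have "\<dots> = (\<Sum>L<2*n+1. cdp a t n L * (if L = 0 then a else 0))"
    by (simp add: tau_lin[OF sp] tau_V[OF sp fr a t])
  also have "\<dots> = cdp a t n 0 * a"
  proof -
    have "(\<Sum>L<2*n+1. cdp a t n L * (if L = 0 then a else 0)) = (\<Sum>L<2*n+1. if L = 0 then cdp a t n 0 * a else 0)"
      by (rule sum.cong) auto
    then show ?thesis by simp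
  qed
  finally show ?thesis using Suc a0 a by (simp add: CC_cdp)
qed

lemma CC_radius:
  assumes "0 < a" "a \<le> 1" "0 < t" "t \<le> 1"
  shows "ereal (1/3) \<le> fps_conv_radius (CC (of_real a) (of_real t))"
  unfolding fps_conv_radius_def
proof (rule conv_radius_geI_ex')
  fix r :: real assume r: "0 < r" "ereal r < ereal (1/3)"
  have "summable (\<lambda>n. (3 * r) ^ n)" using r by (intro summable_geometric) simp
  then show "summable (\<lambda>n. CC (of_real a) (of_real t) $ n * of_real r ^ n)"
  proof (rule summable_comparison_test'[where N=0])
    fix n :: nat
    have b: "\<bar>cdp a t n 0\<bar> \<le> 3 ^ n" using cdp_bound[of a t n 0] assms by simp
    have "norm (CC (of_real a) (of_real t) $ n * of_real r ^ n) = \<bar>cdp a t n 0\<bar> * r ^ n"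
      using r by (simp add: CC_cdp norm_mult norm_power)
    also have "\<dots> \<le> 3 ^ n * r ^ n" using b r by (intro mult_right_mono) auto
    also have "\<dots> = (3 * r) ^ n" by (simp add: power_mult_distrib)
    finally show "norm (CC (of_real a) (of_real t) $ n * of_real r ^ n) \<le> (3 * r) ^ n" .
  qed
qed

lemma rad_mult: "ereal (norm x) < fps_conv_radius f \<Longrightarrow> ereal (norm x) < fps_conv_radius g \<Longrightarrow> ereal (norm x) < fps_conv_radius (f*g)"
  for f g :: "complex fps"
  using fps_conv_radius_mult[of f g] by (meson min_less_iff_conj order.strict_trans2)
lemma rad_add: "ereal (norm x) < fps_conv_radius f \<Longrightarrow> ereal (norm x) < fps_conv_radius g \<Longrightarrow> ereal (norm x) < fps_conv_radius (f+g)"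
  for f g :: "complex fps"
  using fps_conv_radius_add[of f g] by (meson min_less_iff_conj order.strict_trans2)
lemma rad_diff: "ereal (norm x) < fps_conv_radius f \<Longrightarrow> ereal (norm x) < fps_conv_radius g \<Longrightarrow> ereal (norm x) < fps_conv_radius (f-g)"
  for f g :: "complex fps"
  using fps_conv_radius_diff[of f g] by (meson min_less_iff_conj order.strict_trans2)

lemma F_quad:
  fixes C :: "complex fps" and a t x :: complex
  assumes q: "fps_X * C * (fps_const t + fps_const a * (C - 1)) = (C - 1) * (1 + fps_const a * (C - 1))"
    and r: "ereal (norm x) < fps_conv_radius C"
  shows "x * eval_fps C x * (t + a * (eval_fps C x - 1)) = (eval_fps C x - 1) * (1 + a * (eval_fps C x - 1))"
proof -
  have r1: "ereal (norm x) < fps_conv_radius (1::complex fps)" by simp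
  have rc: "\<And>c. ereal (norm x) < fps_conv_radius (fps_const c)" by simp
  have rX: "ereal (norm x) < fps_conv_radius (fps_X :: complex fps)" by simp
  have rC1: "ereal (norm x) < fps_conv_radius (C - 1)" by (rule rad_diff[OF r r1])
  have e1: "eval_fps (C - 1) x = eval_fps C x - 1" by (simp add: eval_fps_diff[OF r r1])
  have e2: "eval_fps (fps_const a * (C - 1)) x = a * (eval_fps C x - 1)"
    by (simp add: eval_fps_mult[OF rc rC1] e1)
  have ra: "ereal (norm x) < fps_conv_radius (fps_const a * (C - 1))" by (rule rad_mult[OF rc rC1])
  have e3: "eval_fps (fps_const t + fps_const a * (C - 1)) x = t + a * (eval_fps C x - 1)"
    by (simp add: eval_fps_add[OF rc ra] e2)
  have e4: "eval_fps (1 + fps_const a * (C - 1)) x = 1 + a * (eval_fps C x - 1)"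
    by (simp add: eval_fps_add[OF r1 ra] e2)
  have rXC: "ereal (norm x) < fps_conv_radius (fps_X * C)" by (rule rad_mult[OF rX r])
  have e5: "eval_fps (fps_X * C) x = x * eval_fps C x" by (simp add: eval_fps_mult[OF rX r])
  have "eval_fps (fps_X * C * (fps_const t + fps_const a * (C - 1))) x = x * eval_fps C x * (t + a * (eval_fps C x - 1))"
    by (simp add: eval_fps_mult[OF rXC rad_add[OF rc ra]] e3 e5)
  moreover have "eval_fps ((C - 1) * (1 + fps_const a * (C - 1))) x = (eval_fps C x - 1) * (1 + a * (eval_fps C x - 1))"
    by (simp add: eval_fps_mult[OF rC1 rad_add[OF r1 ra]] e1 e4)
  ultimately show ?thesis using q by simp
qed

lemma root3:
  fixes F :: "complex \<Rightarrow> complex" and a t :: real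
  assumes a: "0 < a" "a \<le> 1" and t: "0 < t" "t \<le> 1" and rho: "\<rho> > 0"
    and cF: "isCont F 0" and F0: "F 0 = 1"
    and quad: "\<And>x. norm x < \<rho> \<Longrightarrow> x * F x * (of_real t + of_real a * (F x - 1)) = (F x - 1) * (1 + of_real a * (F x - 1))"
  shows "\<exists>r1>0. \<forall>x w. norm x < r1 \<longrightarrow> norm w < r1 \<longrightarrow>
           x * ((1 + w) * (of_real t + of_real a * w)) = w * (1 + of_real a * w) \<longrightarrow> F x = 1 + w"
proof -
  obtain d where d: "d > 0" "\<forall>x. norm x < d \<longrightarrow> norm (F x - F 0) < 1/8"
    using isCont_small[OF cF, of "1/8"] by auto
  define r1 where "r1 = min (min d \<rho>) (1/8)"
  have r1: "r1 > 0" using d rho by (simp add: r1_def)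
  have main: "F x = 1 + w" if x: "norm x < r1" and w: "norm w < r1"
      and h: "x * ((1 + w) * (of_real t + of_real a * w)) = w * (1 + of_real a * w)" for x w
  proof (rule ccontr)
    assume ne: "F x \<noteq> 1 + w"
    define v where "v = F x - 1"
    have nv: "norm v < 1/8" using d(2) x F0 by (simp add: v_def r1_def)
    have nx: "norm x < 1/8" "norm x < \<rho>" using x by (simp_all add: r1_def)
    have nw: "norm w < 1/8" using w by (simp add: r1_def)
    have qv: "x * (1 + v) * (of_real t + of_real a * v) = v * (1 + of_real a * v)"
      using quad[OF nx(2)] by (simp add: v_def)
    have fac: "(v - w) * (x * (of_real a + of_real t) + of_real a * (v + w) * (x - 1) - 1) =
      (x * (1 + v) * (of_real t + of_real a * v) - v * (1 + of_real a * v)) -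
      (x * ((1 + w) * (of_real t + of_real a * w)) - w * (1 + of_real a * w))"
      by (simp add: algebra_simps)
    have "v \<noteq> w" using ne unfolding v_def by (metis add.commute diff_add_cancel)
    then have eq1: "x * (of_real a + of_real t) + of_real a * (v + w) * (x - 1) = 1"
      using fac qv h by simp
    have n1: "norm (x * (of_real a + of_real t)) \<le> norm x * 2"
    proof -
      have "norm (of_real a + of_real t :: complex) = a + t"
        using a t by (simp flip: of_real_add)
      then show ?thesis using a t by (simp add: norm_mult mult_left_mono)
    qed
    have "norm (of_real a * (v + w) * (x - 1)) = a * norm (v + w) * norm (x - 1)"
      using a by (simp add: norm_mult)
    also have "\<dots> \<le> 1 * (1/4) * (9/8)"
    proof (intro mult_mono)
      show "a \<le> 1" by (rule a(2))
      show "norm (v + w) \<le> 1/4" using norm_triangle_ineq[of v w] nv nw by simp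
      show "norm (x - 1) \<le> 9/8" using norm_triangle_ineq4[of x 1] nx by simp
    qed (use a in auto)
    finally have n2: "norm (of_real a * (v + w) * (x - 1)) \<le> 9/32" by simp
    have "norm (1::complex) \<le> norm (x * (of_real a + of_real t)) + norm (of_real a * (v + w) * (x - 1))"
      using norm_triangle_ineq[of "x * (of_real a + of_real t)" "of_real a * (v + w) * (x - 1)"] eq1 by simp
    then show False using n1 n2 nx by simp
  qed
  show ?thesis using r1 main by blast
qed

lemma part3:
  fixes P Q :: "'a::real_algebra_1" and a t :: real
  assumes a: "0 < a" "a \<le> 1" and t: "0 < t" "t \<le> 1" and sp: "star_prob_space st tau"
    and oP: "orth_proj st P" and oQ: "orth_proj st Q" and fr: "free_pair tau P Q"
    and tP: "tau P = a" and tQ: "tau Q = t"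
  shows "(\<exists>SPQP. is_S_transform (\<lambda>n. if n = 0 then 1 else complex_of_real (tau ((P * Q * P) ^ n) / tau P)) SPQP) \<and>
      (\<forall>SPQP. is_S_transform (\<lambda>n. if n = 0 then 1 else complex_of_real (tau ((P * Q * P) ^ n) / tau P)) SPQP \<longrightarrow>
         (\<forall>\<^sub>F z in nhds 0. SPQP z = (of_real a * z + 1) / (of_real a * z + of_real t)))"
proof -
  have PP: "P * P = P" and QQ: "Q * Q = Q" using oP oQ by (auto simp: orth_proj_def)
  define C where "C = CC (of_real a) (of_real t)"
  define F where "F = eval_fps C"
  have mC: "(\<lambda>n. if n = 0 then 1 else complex_of_real (tau ((P * Q * P) ^ n) / tau P)) = (\<lambda>n. C $ n)"
    using moments_CC[OF sp fr tP tQ PP QQ] a by (auto simp: C_def)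
  have rad: "ereal (1/3) \<le> fps_conv_radius C" unfolding C_def by (rule CC_radius[OF a t])
  have rx: "ereal (norm x) < fps_conv_radius C" if "norm x < 1/3" for x
  proof -
    have "ereal (norm x) < ereal (1/3)" using that by simp
    then show ?thesis using rad by (rule order.strict_trans2)
  qed
  have sm: "(\<lambda>n. C $ n * x^n) sums F x" if "norm x < 1/3" for x
    unfolding F_def using sums_eval_fps[OF rx[OF that]] .
  have quad: "x * F x * (of_real t + of_real a * (F x - 1)) = (F x - 1) * (1 + of_real a * (F x - 1))"
    if "norm x < 1/3" for x
    unfolding F_def C_def using F_quad[OF CC_quad rx[OF that, unfolded C_def]] .
  define D where "D w = (1 + w) * (of_real t + of_real a * w)" for w :: complex
  define N0 where "N0 w = 1 + of_real a * w" for w :: complex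
  have rel: "x * D w = w * N0 w" if "norm x < 1/3" "F x = 1 + w" for x w
    using quad[OF that(1)] that(2) by (simp add: D_def N0_def mult.assoc)
  have cD: "continuous_on UNIV D" unfolding D_def by (intro continuous_intros)
  have cN: "continuous_on UNIV N0" unfolding N0_def by (intro continuous_intros)
  have D0: "D 0 \<noteq> 0" using t by (simp add: D_def)
  have ex: "\<exists>S. is_S_transform (\<lambda>n. C $ n) S"
  proof (rule S_exists[of "1/3" _ F, OF _ sm _ cD cN D0])
    show "C $ 1 \<noteq> 0" using t by (simp add: C_def CC_cdp Tm_def)
    have cF: "isCont F 0" unfolding F_def by (rule continuous_eval_fps) (use rx[of 0] in simp)
    have F0: "F 0 = 1" by (simp add: F_def eval_fps_at_0 C_def CC0)
    show "\<exists>r1>0. \<forall>x w. norm x < r1 \<longrightarrow> norm w < r1 \<longrightarrow> x * D w = w * N0 w \<longrightarrow> F x = 1 + w"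
      unfolding D_def N0_def by (rule root3[where \<rho>="1/3", OF a t _ cF F0 quad]) simp_all
  qed simp_all
  have un: "\<forall>\<^sub>F z in nhds 0. S z = (of_real a * z + 1) / (of_real a * z + of_real t)"
    if S: "is_S_transform (\<lambda>n. C $ n) S" for S
  proof -
    have cD0: "isCont D 0" and cN0: "isCont N0 0" using cD cN by (simp_all add: continuous_on_eq_continuous_at)
    have e1: "\<forall>\<^sub>F w in nhds 0. S w = (1 + w) * N0 w / D w"
      by (rule S_unique[of "1/3" _ F, OF _ sm rel cD0 cN0 D0 S]) simp_all
    have e2: "\<forall>\<^sub>F w in nhds (0::complex). norm w < 1"
      unfolding eventually_nhds_metric by (intro exI[of _ 1]) (simp add: dist_norm)
    show ?thesis using e1 e2
    proof eventually_elim
      case (elim w)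
      have "1 + w \<noteq> 0"
      proof
        assume "1 + w = 0" then have "w = -1" by (simp add: add_eq_0_iff)
        then show False using elim(2) by simp
      qed
      then show ?case using elim(1) by (simp add: D_def N0_def add_ac)
    qed
  qed
  show ?thesis unfolding mC using ex un by blast
qed

lemma part2:
  fixes st :: "'a::real_algebra_1 \<Rightarrow> 'a" and tau Q and th al :: real
  assumes th: "0 < th" and sp: "star_prob_space st tau" and oQ: "orth_proj st Q" and tQ: "tau Q = th"
  shows "(\<exists>SQ. is_S_transform (\<lambda>n. complex_of_real (tau (Q ^ n))) SQ) \<and>
      (\<forall>SQ. is_S_transform (\<lambda>n. complex_of_real (tau (Q ^ n))) SQ \<longrightarrow>
         (\<forall>\<^sub>F z in nhds 0. (of_real al * z + 1) / (of_real al * z + of_real th)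
                            = SQ (of_real al * z)))"
proof -
  have QQ: "Q * Q = Q" using oQ by (simp add: orth_proj_def)
  have Qn: "Q ^ Suc n = Q" for n by (induction n) (simp_all add: QQ)
  have t1: "tau 1 = 1" using sp by (simp add: star_prob_space_def)
  have m: "(\<lambda>n. complex_of_real (tau (Q ^ n))) = (\<lambda>n. if n = 0 then 1 else of_real th)"
  proof
    fix n show "complex_of_real (tau (Q ^ n)) = (if n = 0 then 1 else of_real th)"
      by (cases n) (simp_all add: t1 tQ Qn del: power_Suc)
  qed
  define F where "F x = of_real th / (1 - x) + (1 - of_real th)" for x :: complex
  have sm: "(\<lambda>n. (if n = 0 then 1 else of_real th) * x^n) sums F x" if "norm x < 1" for x :: complex
  proof -
    have s1: "(\<lambda>n. of_real th * x^n) sums (of_real th * (1 / (1 - x)))"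
      by (rule sums_mult[OF geometric_sums[OF that]])
    have s2: "(\<lambda>n. if n = 0 then (\<lambda>_. 1 - of_real th) n else 0) sums (1 - (of_real th :: complex))"
      by (rule sums_single)
    have "(\<lambda>n. of_real th * x^n + (if n = 0 then (\<lambda>_. 1 - of_real th) n else 0)) sums
          (of_real th * (1 / (1 - x)) + (1 - of_real th))"
      by (rule sums_add[OF s1 s2])
    moreover have "(\<lambda>n. of_real th * x^n + (if n = 0 then (\<lambda>_. 1 - of_real th) n else 0)) =
       (\<lambda>n. (if n = 0 then 1 else of_real th) * x^n)" by (auto simp: fun_eq_iff)
    ultimately show ?thesis by (simp add: F_def)
  qed
  have x1: "1 - x \<noteq> 0" if "norm x < 1" for x :: complex
  proof
    assume "1 - x = 0" then have "x = 1" by simp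
    then show False using that by simp
  qed
  have rel: "x * (of_real th + w) = w * 1" if "norm x < 1" "F x = 1 + w" for x w :: complex
  proof -
    have "of_real th / (1 - x) + (1 - of_real th) = 1 + w" using that(2) by (simp add: F_def)
    then have "of_real th = (w + of_real th) * (1 - x)" using x1[OF that(1)] by (simp add: field_simps)
    then show ?thesis by (simp add: algebra_simps)
  qed
  have cD: "continuous_on UNIV (\<lambda>w. of_real th + w :: complex)" by (intro continuous_intros)
  have cN: "continuous_on UNIV (\<lambda>w. 1 :: complex)" by (intro continuous_intros)
  have ex: "\<exists>S. is_S_transform (\<lambda>n. if n = 0 then 1 else of_real th) S"
  proof (rule S_exists[of 1 _ F, OF _ sm _ cD cN])
    show "\<exists>r1>0. \<forall>x w. norm x < r1 \<longrightarrow> norm w < r1 \<longrightarrow> x * (of_real th + w) = w * 1 \<longrightarrow> F x = 1 + w"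
    proof (intro exI[of _ 1] conjI allI impI)
      fix x w :: complex assume h: "norm x < 1" "norm w < 1" "x * (of_real th + w) = w * 1"
      have "of_real th = (w + of_real th) * (1 - x)" using h(3) by (simp add: algebra_simps)
      then show "F x = 1 + w" using x1[OF h(1)] by (simp add: F_def field_simps)
    qed simp
  qed (use th in simp_all)
  have un: "\<forall>\<^sub>F z in nhds 0. (of_real al * z + 1) / (of_real al * z + of_real th) = S (of_real al * z)"
    if S: "is_S_transform (\<lambda>n. if n = 0 then 1 else of_real th) S" for S
  proof -
    have cD0: "isCont (\<lambda>w. of_real th + w :: complex) 0" by (intro continuous_intros)
    have cN0: "isCont (\<lambda>w. 1 :: complex) 0" by (intro continuous_intros)
    have "\<forall>\<^sub>F w in nhds 0. S w = (1 + w) * 1 / (of_real th + w)"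
      by (rule S_unique[of 1 _ F, OF _ sm rel cD0 cN0 _ S]) (use th in simp_all)
    then have "\<forall>\<^sub>F z in nhds 0. S (of_real al * z) = (1 + of_real al * z) * 1 / (of_real th + of_real al * z)"
      by (rule ev_scale)
    then show ?thesis by eventually_elim (simp add: add_ac)
  qed
  show ?thesis unfolding m using ex un by blast
qed

lemma den_nz:
  fixes lam theta :: real and z :: complex
  assumes "lam > 0" "theta > 0" "norm z < 1/lam"
  shows "1 + of_real lam * z \<noteq> 0" "of_real lam * of_real theta * z + of_real theta \<noteq> 0"
proof -
  show n1: "1 + of_real lam * z \<noteq> 0"
  proof
    assume "1 + of_real lam * z = 0"
    then have "of_real lam * z = -1" by (simp add: add_eq_0_iff)
    then have "lam * norm z = 1" using assms(1) by (metis abs_of_pos norm_minus_cancel norm_mult norm_of_real norm_one)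
    then show False using assms by (simp add: field_simps)
  qed
  have "of_real lam * of_real theta * z + of_real theta = of_real theta * (1 + of_real lam * z)"
    by (simp add: algebra_simps)
  then show "of_real lam * of_real theta * z + of_real theta \<noteq> 0" using n1 assms(2) by simp
qed

lemma S0_deriv:
  fixes L T z :: complex
  assumes "L * T * z + T \<noteq> 0"
  shows "((\<lambda>w. (L * T * w + 1) / (L * T * w + T)) has_field_derivative
          (L * T * (T - 1) / (L * T * z + T)^2)) (at z)"
  using assms
  by (auto intro!: derivative_eq_intros simp: field_simps power2_eq_square)

lemma S0_lin:
  fixes L T z :: complex
  assumes "L * T * z + T \<noteq> 0"
  shows "(2 * (L * T) * z + 1) - T * (1 + 2 * L * z) * ((L * T * z + 1) / (L * T * z + T))
     - T * z * (1 + L * z) * (L * T * (T - 1) / (L * T * z + T)^2) = 0"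
proof -
  have frac3: "X - Y * (N / D) - Z * (K / D^2) = (X * D^2 - Y * N * D - Z * K) / D^2"
    if "D \<noteq> 0" for X Y N D Z K :: complex
    using that by (simp add: field_simps power2_eq_square)
  have "(2 * (L * T) * z + 1) * (L * T * z + T)^2 - T * (1 + 2 * L * z) * (L * T * z + 1) * (L * T * z + T)
      - T * z * (1 + L * z) * (L * T * (T - 1)) = 0"
    by (simp add: algebra_simps power2_eq_square)
  then show ?thesis by (subst frac3[OF assms]) simp
qed

lemma deriv_sq:
  assumes "(S has_field_derivative d) (at z)"
  shows "deriv (\<lambda>w. (S w)^2) z = 2 * S z * d"
proof -
  have "((\<lambda>w. (S w)^2) has_field_derivative of_nat 2 * (d * S z ^ (2 - Suc 0))) (at z)"
    by (rule DERIV_power[OF assms])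
  then show ?thesis by (simp add: DERIV_imp_deriv)
qed

lemma E_factor:
  fixes A L T z s d dd :: complex
  assumes "dd = 2 * s * d"
  shows "(2 * A * z + 1) * s - T * (1 + 2 * L * z) * s\<^sup>2 - T * z * (1 + L * z) / 2 * dd
     = s * ((2 * A * z + 1) - T * (1 + 2 * L * z) * s - T * z * (1 + L * z) * d)"
  using assms by (simp add: algebra_simps power2_eq_square)

lemma part1:
  fixes lam theta :: real and S :: "complex \<Rightarrow> complex"
  assumes lam: "lam > 0" and th: "0 < theta"
  shows "((S analytic_on {0} \<and>
      (\<forall>\<^sub>F z in nhds 0.
         (2 * of_real (lam * theta) * z + 1) * S z
         - of_real theta * (1 + 2 * of_real lam * z) * (S z)\<^sup>2
         - of_real theta * z * (1 + of_real lam * z) / 2 * deriv (\<lambda>w. (S w)\<^sup>2) z = 0))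
     \<longleftrightarrow>
     ((\<forall>\<^sub>F z in nhds 0. S z = 0) \<or>
      (\<forall>\<^sub>F z in nhds 0. S z = (of_real (lam * theta) * z + 1) / (of_real (lam * theta) * z + of_real theta))))"
    (is "(?an \<and> ?ev) \<longleftrightarrow> (?z \<or> ?s0)")
proof -
  define L where "L = (of_real lam :: complex)"
  define T where "T = (of_real theta :: complex)"
  have A: "(of_real (lam * theta) :: complex) = L * T" by (simp add: L_def T_def)
  define S0 where "S0 w = (L * T * w + 1) / (L * T * w + T)" for w
  define S0' where "S0' w = L * T * (T - 1) / (L * T * w + T)^2" for w
  define r0 where "r0 = 1 / lam"
  have r0: "r0 > 0" using lam by (simp add: r0_def)
  have den: "L * T * z + T \<noteq> 0" "1 + L * z \<noteq> 0" if "norm z < r0" for z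
    using den_nz[OF lam th, of z] that by (simp_all add: r0_def L_def T_def)
  have T0: "T \<noteq> 0" using th by (simp add: T_def)
  have dS0: "(S0 has_field_derivative S0' z) (at z)" if "norm z < r0" for z
    unfolding S0_def S0'_def by (rule S0_deriv[OF den(1)[OF that]])
  have lin0: "(2 * (L * T) * z + 1) - T * (1 + 2 * L * z) * S0 z - T * z * (1 + L * z) * S0' z = 0"
    if "norm z < r0" for z
    unfolding S0_def S0'_def by (rule S0_lin[OF den(1)[OF that]])
  have hol0: "S0 holomorphic_on ball 0 r0"
    unfolding S0_def by (intro holomorphic_intros) (use den in auto)
  let ?E = "\<lambda>S z. (2 * (L * T) * z + 1) * S z - T * (1 + 2 * L * z) * (S z)\<^sup>2
         - T * z * (1 + L * z) / 2 * deriv (\<lambda>w. (S w)\<^sup>2) z"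
  have evE: "?ev \<longleftrightarrow> (\<forall>\<^sub>F z in nhds 0. ?E S z = 0)" by (simp add: A L_def T_def)
  have s0E: "?s0 \<longleftrightarrow> (\<forall>\<^sub>F z in nhds 0. S z = S0 z)" by (simp only: S0_def L_def T_def of_real_mult)
  show ?thesis
  proof
    assume "?an \<and> ?ev"
    then have an: "?an" and ev: "\<forall>\<^sub>F z in nhds 0. ?E S z = 0" using evE[THEN iffD1] by blast+
    obtain e where e: "e > 0" "S holomorphic_on ball 0 e" using an unfolding analytic_on_def by auto
    obtain d1 where d1: "d1 > 0" "\<forall>z. dist z 0 < d1 \<longrightarrow> ?E S z = 0"
      using ev unfolding eventually_nhds_metric by blast
    define R where "R = min (min e d1) r0"
    have R: "R > 0" using e d1 r0 by (simp add: R_def)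
    have holB: "S holomorphic_on ball 0 R" using e(2) by (rule holomorphic_on_subset) (auto simp: R_def)
    have dS: "(S has_field_derivative deriv S z) (at z)" if "z \<in> ball 0 R" for z
      by (rule holomorphic_derivI[OF holB open_ball that])
    have linS: "S z * ((2 * (L * T) * z + 1) - T * (1 + 2 * L * z) * S z - T * z * (1 + L * z) * deriv S z) = 0"
      if "z \<in> ball 0 R" for z
    proof -
      have "?E S z = 0" using d1(2) that by (simp add: R_def dist_norm)
      then show ?thesis by (subst (asm) E_factor[OF deriv_sq[OF dS[OF that]]])
    qed
    show "?z \<or> ?s0"
    proof (cases "\<forall>z\<in>ball 0 R. S z = 0")
      case True
      then have ?z unfolding eventually_nhds_metric using R by (auto simp: dist_norm)
      then show ?thesis by blast
    next
      case False
      then obtain \<beta> where \<beta>: "\<beta> \<in> ball 0 R" "S \<beta> \<noteq> 0" by blast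
      have cS: "isCont S 0"
        using holomorphic_on_imp_continuous_on[OF holB] R
        by (intro continuous_on_interior[of "ball 0 R"]) auto
      obtain r where r: "r > 0" "r \<le> R" "\<And>z. z \<noteq> 0 \<Longrightarrow> norm z < r \<Longrightarrow> S z \<noteq> 0"
      proof (cases "S 0 = 0")
        case True
        have z0: "(0::complex) \<in> ball 0 R" using R by simp
        have "\<exists>r1. 0 < r1 \<and> r1 \<le> R \<and> (\<forall>z. z \<noteq> 0 \<and> norm z < r1 \<longrightarrow> S z \<noteq> 0)"
        proof (rule isolated_zeros[OF holB open_ball connected_ball z0 True \<beta>(1) \<beta>(2)])
          fix r1 assume h: "0 < r1" "ball 0 r1 \<subseteq> ball 0 R" "\<And>z. z \<in> ball 0 r1 - {0} \<Longrightarrow> S z \<noteq> 0"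
          show ?thesis
          proof (intro exI[of _ "min r1 R"] conjI allI impI)
            fix z :: complex assume "z \<noteq> 0 \<and> norm z < min r1 R"
            then show "S z \<noteq> 0" using h(3)[of z] by simp
          qed (use h R in auto)
        qed
        then obtain r1 where r1: "0 < r1" "r1 \<le> R" "\<And>z. z \<noteq> 0 \<Longrightarrow> norm z < r1 \<Longrightarrow> S z \<noteq> 0" by blast
        show ?thesis by (rule that[of r1]) (use r1 in auto)
      next
        case False
        then have nS: "norm (S 0) > 0" by simp
        obtain d where d: "d > 0" "\<forall>w. norm w < d \<longrightarrow> norm (S w - S 0) < norm (S 0)"
          using isCont_small[OF cS nS] by blast
        show ?thesis
        proof (rule that[of "min d R"])
          fix z :: complex assume "z \<noteq> 0" "norm z < min d R"
          then have "norm (S z - S 0) < norm (S 0)" using d(2) by simp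
          then show "S z \<noteq> 0" by auto
        qed (use d R in auto)
      qed
      define h where "h w = w * (1 + L * w) * (S w - S0 w)" for w
      have rR0: "norm z < r0" if "norm z < r" for z using that r(2) by (simp add: R_def)
      have dh: "(h has_field_derivative ((1 + 2 * L * z) * (S z - S0 z) + z * (1 + L * z) * (deriv S z - S0' z))) (at z)"
        if "z \<in> ball 0 r" for z
      proof -
        have zR: "z \<in> ball 0 R" using that r(2) by auto
        have zr0: "norm z < r0" using rR0 that by simp
        show ?thesis unfolding h_def
          by (rule derivative_eq_intros dS[OF zR] dS0[OF zr0] refl)+ (simp add: algebra_simps)
      qed
      have h0: "(h has_field_derivative 0) (at z)" if "z \<in> ball 0 r - {0}" for z
      proof -
        have zr: "z \<in> ball 0 r" "z \<noteq> 0" using that by auto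
        have zR: "z \<in> ball 0 R" using zr r(2) by auto
        have Sz: "S z \<noteq> 0" using r(3)[of z] zr by simp
        have l1: "(2 * (L * T) * z + 1) - T * (1 + 2 * L * z) * S z - T * z * (1 + L * z) * deriv S z = 0"
          using linS[OF zR] Sz by simp
        have l2: "(2 * (L * T) * z + 1) - T * (1 + 2 * L * z) * S0 z - T * z * (1 + L * z) * S0' z = 0"
        proof -
          have zn: "norm z < r" using zr(1) by simp
          show ?thesis by (rule lin0[OF rR0[OF zn]])
        qed
        have "T * ((1 + 2 * L * z) * (S z - S0 z) + z * (1 + L * z) * (deriv S z - S0' z)) = 0"
          using l1 l2 by (simp add: algebra_simps)
        then have "(1 + 2 * L * z) * (S z - S0 z) + z * (1 + L * z) * (deriv S z - S0' z) = 0"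
          using T0 by simp
        then show ?thesis using dh[OF zr(1)] by simp
      qed
      have ch: "continuous_on (ball 0 r) h"
        by (rule DERIV_continuous_on[of _ _ "\<lambda>z. (1 + 2 * L * z) * (S z - S0 z) + z * (1 + L * z) * (deriv S z - S0' z)"])
           (use dh in \<open>auto intro: has_field_derivative_at_within\<close>)
      obtain c where c: "\<And>x. x \<in> ball 0 r \<Longrightarrow> h x = c"
        using DERIV_zero_connected_constant[OF connected_ball open_ball finite.intros(2)[OF finite.emptyI, of 0] ch]
          h0 by blast
      have "c = 0" using c[of 0] r(1) by (simp add: h_def)
      have eq: "S z = S0 z" if "z \<noteq> 0" "norm z < r" for z
      proof -
        have "h z = 0" using c[of z] \<open>c = 0\<close> that by simp
        moreover have "z * (1 + L * z) \<noteq> 0" using that den(2)[OF rR0[OF that(2)]] by simp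
        ultimately show ?thesis by (simp add: h_def)
      qed
      have cS0: "isCont S0 0" unfolding S0_def using T0 by (intro continuous_intros) auto
      have e0: "S 0 = S0 0" by (rule cont_agree[OF cS cS0 r(1) eq])
      have "\<forall>z. dist z 0 < r \<longrightarrow> S z = S0 z"
      proof (intro allI impI)
        fix z :: complex assume "dist z 0 < r"
        then show "S z = S0 z" using eq[of z] e0 by (cases "z = 0") (auto simp: dist_norm)
      qed
      then have "\<forall>\<^sub>F z in nhds 0. S z = S0 z" unfolding eventually_nhds_metric using r(1) by blast
      then have ?s0 using s0E[THEN iffD2] by blast
      then show ?thesis by blast
    qed
  next
    assume "?z \<or> ?s0"
    then show "?an \<and> ?ev"
    proof
      assume ?z
      then obtain d where d: "d > 0" "\<forall>z. dist z 0 < d \<longrightarrow> S z = 0"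
        unfolding eventually_nhds_metric by blast
      have hol: "S holomorphic_on ball 0 d"
        by (rule holomorphic_transform[of "\<lambda>_. 0"]) (use d in \<open>auto simp: dist_norm\<close>)
      have an: ?an unfolding analytic_on_def using d(1) hol by auto
      have "?E S z = 0" if "dist z 0 < d" for z
      proof -
        have "\<forall>\<^sub>F w in nhds z. w \<in> ball 0 d" using that by (intro eventually_nhds_in_open) (auto simp: dist_commute)
        then have "\<forall>\<^sub>F w in nhds z. (S w)\<^sup>2 = 0" by eventually_elim (use d in \<open>auto simp: dist_commute\<close>)
        then have "deriv (\<lambda>w. (S w)\<^sup>2) z = deriv (\<lambda>w. 0) z" by (rule deriv_cong_ev) simp
        then show ?thesis using d that by simp
      qed
      then have "\<forall>\<^sub>F z in nhds 0. ?E S z = 0" unfolding eventually_nhds_metric using d(1) by blast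
      then have ?ev using evE[THEN iffD2] by blast
      then show "?an \<and> ?ev" using an by blast
    next
      assume ?s0
      then have "\<forall>\<^sub>F z in nhds 0. S z = S0 z" using s0E[THEN iffD1] by blast
      then obtain d0 where d0: "d0 > 0" "\<forall>z. dist z 0 < d0 \<longrightarrow> S z = S0 z"
        unfolding eventually_nhds_metric by blast
      define d where "d = min d0 r0"
      have d: "d > 0" "\<And>z. norm z < d \<Longrightarrow> S z = S0 z" "\<And>z. norm z < d \<Longrightarrow> norm z < r0"
        using d0 r0 by (auto simp: d_def dist_norm)
      have hol: "S holomorphic_on ball 0 d"
        by (rule holomorphic_transform[of S0]) (use hol0 d in \<open>auto simp: d_def\<close>)
      have an: ?an unfolding analytic_on_def using d(1) hol by auto
      have "?E S z = 0" if "dist z 0 < d" for z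
      proof -
        have z: "norm z < d" using that by (simp add: dist_norm)
        have "\<forall>\<^sub>F w in nhds z. w \<in> ball 0 d" using that by (intro eventually_nhds_in_open) (auto simp: dist_commute)
        then have "\<forall>\<^sub>F w in nhds z. (S w)\<^sup>2 = (S0 w)\<^sup>2" by eventually_elim (use d in \<open>auto\<close>)
        then have "deriv (\<lambda>w. (S w)\<^sup>2) z = deriv (\<lambda>w. (S0 w)\<^sup>2) z" by (rule deriv_cong_ev) simp
        also have "\<dots> = 2 * S0 z * S0' z" by (rule deriv_sq[OF dS0[OF d(3)[OF z]]])
        finally have dv: "deriv (\<lambda>w. (S w)\<^sup>2) z = 2 * S z * S0' z" using d(2)[OF z] by simp
        have "?E S z = S z * ((2 * (L * T) * z + 1) - T * (1 + 2 * L * z) * S z - T * z * (1 + L * z) * S0' z)"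
          by (rule E_factor[OF dv])
        then show ?thesis using lin0[OF d(3)[OF z]] d(2)[OF z] by simp
      qed
      then have "\<forall>\<^sub>F z in nhds 0. ?E S z = 0" unfolding eventually_nhds_metric using d(1) by blast
      then have ?ev using evE[THEN iffD2] by blast
      then show "?an \<and> ?ev" using an by blast
    qed
  qed
qed

theorem mainTheorem2:
  fixes lam theta :: real and S :: "complex \<Rightarrow> complex"
  assumes "lam > 0" and "0 < theta" and "theta \<le> 1" and "0 < lam * theta" and "lam * theta \<le> 1"
  shows
   "((S analytic_on {0} \<and>
      (\<forall>\<^sub>F z in nhds 0.
         (2 * of_real (lam * theta) * z + 1) * S z
         - of_real theta * (1 + 2 * of_real lam * z) * (S z)\<^sup>2
         - of_real theta * z * (1 + of_real lam * z) / 2 * deriv (\<lambda>w. (S w)\<^sup>2) z = 0))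
     \<longleftrightarrow>
     ((\<forall>\<^sub>F z in nhds 0. S z = 0) \<or>
      (\<forall>\<^sub>F z in nhds 0. S z = (of_real (lam * theta) * z + 1) / (of_real (lam * theta) * z + of_real theta))))
   \<and>
   (\<forall>(st :: 'a::real_algebra_1 \<Rightarrow> 'a) tau Q.
      star_prob_space st tau \<and> orth_proj st Q \<and> tau Q = theta \<longrightarrow>
      (\<exists>SQ. is_S_transform (\<lambda>n. complex_of_real (tau (Q ^ n))) SQ) \<and>
      (\<forall>SQ. is_S_transform (\<lambda>n. complex_of_real (tau (Q ^ n))) SQ \<longrightarrow>
         (\<forall>\<^sub>F z in nhds 0. (of_real (lam * theta) * z + 1) / (of_real (lam * theta) * z + of_real theta)
                            = SQ (of_real (lam * theta) * z))))
   \<and>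
   (\<forall>(st :: 'a::real_algebra_1 \<Rightarrow> 'a) tau P Q.
      star_prob_space st tau \<and> orth_proj st P \<and> orth_proj st Q \<and> free_pair tau P Q \<and>
      tau P = lam * theta \<and> tau Q = theta \<longrightarrow>
      (\<exists>SPQP. is_S_transform (\<lambda>n. if n = 0 then 1 else complex_of_real (tau ((P * Q * P) ^ n) / tau P)) SPQP) \<and>
      (\<forall>SPQP. is_S_transform (\<lambda>n. if n = 0 then 1 else complex_of_real (tau ((P * Q * P) ^ n) / tau P)) SPQP \<longrightarrow>
         (\<forall>\<^sub>F z in nhds 0. SPQP z = (of_real (lam * theta) * z + 1) / (of_real (lam * theta) * z + of_real theta))))"
    apply (rule conjI)
   apply (rule part1[OF assms(1) assms(2)])
  apply (rule conjI)
   apply (intro allI impI)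
   apply (elim conjE)
   apply (rule part2[OF assms(2)]; assumption)
  apply (intro allI impI)
  apply (elim conjE)
  apply (rule part3[OF assms(4) assms(5) assms(2) assms(3)]; assumption)
  done

end
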